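(* Let $G=(V,E)$ be a finite, simple, undirected graph with $m=|E|\ge 1$ edges and no isolated vertices. Then for every partition $\Pi$ of $V$ into nonempty sets, the total null-adjusted persistence satisfies $\mathcal{P}^{\star}_{\Pi}\ge -1$. Moreover, if $G$ is multipartite, i.e. $V$ admits a partition $\Pi=\{V_1,\dots,V_k\}$ into nonempty independent sets (no edge has both endpoints in the same $V_j$), then $\mathcal{P}^{\star}_{\Pi}=-1$ for this canonical partition $\Pi$.
   Context: For a subset $\mathcal{C}\subseteq V$, let $m_i(\mathcal{C})$ be the number of edges with both endpoints in $\mathcal{C}$ and $m_e(\mathcal{C})$ the number of edges with exactly one endpoint in $\mathcal{C}$ (so $2m_i+m_e=\sum_{v\in\mathcal{C}}\deg v>0$ for nonempty $\mathcal{C}$ when there are no isolated vertices). The null-adjusted persistence of $\mathcal{C}$ is $\mathcal{P}^{\star}_{\mathcal{C}}=\frac{2m_i}{2m_i+m_e}-\frac{2m_i+m_e}{2m}$, where $m=|E|$. For a partition $\Pi$ of $V$, the total null-adjusted persistence is $\mathcal{P}^{\star}_{\Pi}=\sum_{\mathcal{C}\in\Pi}\mathcal{P}^{\star}_{\mathcal{C}}$. *)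

theory Defs
  imports Complex_Main "HOL-Library.Disjoint_Sets"
begin

definition simple_graph :: "'a set \<Rightarrow> 'a set set \<Rightarrow> bool" where
  "simple_graph V E \<longleftrightarrow> finite V \<and> (\<forall>e\<in>E. e \<subseteq> V \<and> card e = 2)"

definition no_isolated :: "'a set \<Rightarrow> 'a set set \<Rightarrow> bool" where
  "no_isolated V E \<longleftrightarrow> (\<forall>v\<in>V. \<exists>e\<in>E. v \<in> e)"

definition m_int :: "'a set set \<Rightarrow> 'a set \<Rightarrow> nat" where
  "m_int E C = card {e\<in>E. e \<subseteq> C}"

definition m_ext :: "'a set set \<Rightarrow> 'a set \<Rightarrow> nat" where
  "m_ext E C = card {e\<in>E. card (e \<inter> C) = 1}"

definition persistence_star :: "'a set set \<Rightarrow> 'a set \<Rightarrow> real" where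
  "persistence_star E C =
     2 * real (m_int E C) / (2 * real (m_int E C) + real (m_ext E C))
     - (2 * real (m_int E C) + real (m_ext E C)) / (2 * real (card E))"

definition total_persistence_star :: "'a set set \<Rightarrow> 'a set set \<Rightarrow> real" where
  "total_persistence_star E P = (\<Sum>C\<in>P. persistence_star E C)"

definition independent_set :: "'a set set \<Rightarrow> 'a set \<Rightarrow> bool" where
  "independent_set E C \<longleftrightarrow> (\<forall>e\<in>E. \<not> e \<subseteq> C)"

end

theory Submission
  imports Defs
begin

lemma card_filter_sum: "finite A \<Longrightarrow> card {x\<in>A. P x} = (\<Sum>x\<in>A. if P x then 1 else (0::nat))"
  by (simp add: sum.If_cases Int_def conj_commute)

lemma deg_sum:
  assumes "finite E" "\<forall>e\<in>E. card e = 2"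
  shows "2 * m_int E C + m_ext E C = (\<Sum>e\<in>E. card (e \<inter> C))"
proof -
  have "2 * m_int E C + m_ext E C = (\<Sum>e\<in>E. 2 * (if e \<subseteq> C then 1 else 0) + (if card (e \<inter> C) = 1 then 1 else 0))"
    unfolding m_int_def m_ext_def using assms(1)
    by (simp add: card_filter_sum sum.distrib sum_distrib_left)
  also have "\<dots> = (\<Sum>e\<in>E. card (e \<inter> C))"
  proof (rule sum.cong)
    fix e assume "e \<in> E"
    hence c: "card e = 2" using assms(2) by auto
    hence fe: "finite e" using card.infinite by fastforce
    have le: "card (e \<inter> C) \<le> 2" using c fe by (metis Int_lower1 card_mono)
    have "e \<subseteq> C \<longleftrightarrow> card (e \<inter> C) = 2"
    proof
      assume "e \<subseteq> C" thus "card (e \<inter> C) = 2" using c by (simp add: Int_absorb2)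
    next
      assume "card (e \<inter> C) = 2"
      hence "e \<inter> C = e" using c fe by (metis Int_lower1 card_subset_eq)
      thus "e \<subseteq> C" by blast
    qed
    thus "2 * (if e \<subseteq> C then 1 else 0) + (if card (e \<inter> C) = 1 then 1 else 0) = card (e \<inter> C)"
      using le by auto
  qed simp
  finally show ?thesis .
qed

lemma part_sum:
  assumes "simple_graph V E" "partition_on V P"
  shows "(\<Sum>C\<in>P. real (2 * m_int E C + m_ext E C)) = 2 * real (card E)"
proof -
  have fV: "finite V" and EV: "\<forall>e\<in>E. e \<subseteq> V \<and> card e = 2"
    using assms(1) unfolding simple_graph_def by auto
  have fE: "finite E" using fV EV by (meson PowI finite_Pow_iff finite_subset subsetI)
  have fP: "finite P" using assms(2) fV
    by (metis finite_UnionD partition_on_def)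
  have "(\<Sum>C\<in>P. 2 * m_int E C + m_ext E C) = (\<Sum>C\<in>P. \<Sum>e\<in>E. card (e \<inter> C))"
    using deg_sum[OF fE] EV by simp
  also have "\<dots> = (\<Sum>e\<in>E. \<Sum>C\<in>P. card (e \<inter> C))" by (rule sum.swap)
  also have "\<dots> = (\<Sum>e\<in>E. 2)"
  proof (rule sum.cong)
    fix e assume "e \<in> E"
    hence c: "card e = 2" and sub: "e \<subseteq> V" using EV by auto
    hence fe: "finite e" using card.infinite by fastforce
    have "card (\<Union>C\<in>P. e \<inter> C) = (\<Sum>C\<in>P. card (e \<inter> C))"
    proof (rule card_UN_disjoint[OF fP])
      show "\<forall>i\<in>P. finite (e \<inter> i)" using fe by auto
      show "\<forall>i\<in>P. \<forall>j\<in>P. i \<noteq> j \<longrightarrow> e \<inter> i \<inter> (e \<inter> j) = {}"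
        using assms(2) unfolding partition_on_def disjoint_def by blast
    qed
    moreover have "(\<Union>C\<in>P. e \<inter> C) = e"
      using assms(2) sub unfolding partition_on_def by blast
    ultimately show "(\<Sum>C\<in>P. card (e \<inter> C)) = 2" using c by simp
  qed simp
  finally have "(\<Sum>C\<in>P. 2 * m_int E C + m_ext E C) = 2 * card E" by simp
  hence "real (\<Sum>C\<in>P. 2 * m_int E C + m_ext E C) = 2 * real (card E)" by simp
  thus ?thesis by (simp only: of_nat_sum)
qed

theorem proposition3:
  fixes V :: "'a set" and E :: "'a set set"
  assumes "simple_graph V E"
    and "card E \<ge> 1"
    and "no_isolated V E"
  shows "(\<forall>P. partition_on V P \<longrightarrow> total_persistence_star E P \<ge> -1)
    \<and> (\<forall>P. partition_on V P \<and> (\<forall>C\<in>P. independent_set E C)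
            \<longrightarrow> total_persistence_star E P = -1)"
proof -
  have m0: "real (card E) > 0" using assms(2) by simp
  have key: "total_persistence_star E P =
      (\<Sum>C\<in>P. 2 * real (m_int E C) / (2 * real (m_int E C) + real (m_ext E C))) - 1"
    if P: "partition_on V P" for P
  proof -
    have "total_persistence_star E P =
      (\<Sum>C\<in>P. 2 * real (m_int E C) / (2 * real (m_int E C) + real (m_ext E C)))
      - (\<Sum>C\<in>P. real (2 * m_int E C + m_ext E C)) / (2 * real (card E))"
      unfolding total_persistence_star_def persistence_star_def
      by (simp add: sum_subtractf sum_divide_distrib)
    also have "\<dots> = (\<Sum>C\<in>P. 2 * real (m_int E C) / (2 * real (m_int E C) + real (m_ext E C))) - 1"
      using part_sum[OF assms(1) P] m0 by simp
    finally show ?thesis .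
  qed
  show ?thesis
  proof (intro conjI allI impI)
    fix P assume P: "partition_on V P"
    have "(\<Sum>C\<in>P. 2 * real (m_int E C) / (2 * real (m_int E C) + real (m_ext E C))) \<ge> 0"
      by (intro sum_nonneg) simp
    thus "total_persistence_star E P \<ge> -1" using key[OF P] by simp
  next
    fix P assume H: "partition_on V P \<and> (\<forall>C\<in>P. independent_set E C)"
    have "\<forall>C\<in>P. m_int E C = 0"
      using H unfolding independent_set_def m_int_def by (metis (no_types, lifting) card.empty empty_Collect_eq)
    hence "(\<Sum>C\<in>P. 2 * real (m_int E C) / (2 * real (m_int E C) + real (m_ext E C))) = 0"
      by simp
    thus "total_persistence_star E P = -1" using key H by simp
  qed
qed

end
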